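(* Let $n\ge2$, $d\ge1$, $r\ge3$ with $n\ge d$ and $dr\equiv0\pmod n$. (1) If $dr=n$, then $\mathrm{diam}(Q_n(d,r))=n+r$ when $r=3$, and $\mathrm{diam}(Q_n(d,r))=n+\lfloor 3r/2\rfloor-2$ when $r\ge4$. (2) If $dr\ge 2n$, then $\mathrm{diam}(Q_n(d,r))=n+\max\{\lfloor r/2\rfloor,\,2\lceil n/d\rceil-2\}$.
   Context: $\mathbb{Z}_2^n=\{0,1\}^n$ with coordinatewise addition mod 2; $e_i$ is the $i$-th standard basis vector, subscripts read modulo $n$. The recursive cube of rings $Q_n(d,r)$ (for $n\ge d$, $dr\equiv0\pmod n$) is the simple graph on $\mathbb{Z}_2^n\times\mathbb{Z}_r$ in which $(a,x)$ is adjacent to $(a+e_{i+dx},x)$ for $1\le i\le d$ and to $(a,x\pm1)$. *)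

theory Defs
  imports Main
begin

text \<open>Vertices of Q_n(d,r): pairs (a, x) where a \<subseteq> {0..<n} encodes a vector of Z_2^n
  (coordinate k, 0-based, corresponds to e_(k+1)) and x \<in> {0..<r} encodes an element of Z_r.
  Adding e_j is symmetric difference with a singleton.\<close>

definition rcr_vertices :: "nat \<Rightarrow> nat \<Rightarrow> (nat set \<times> nat) set" where
  "rcr_vertices n r = {(a, x). a \<subseteq> {0..<n} \<and> x < r}"

definition flip :: "nat set \<Rightarrow> nat \<Rightarrow> nat set" where
  "flip a k = (a - {k}) \<union> ({k} - a)"

text \<open>Edge relation: (a,x) ~ (a + e_(i+dx), x) for 1 \<le> i \<le> d (0-based: j = i-1 \<in> {0..<d},
  coordinate (j + d*x) mod n), and (a,x) ~ (a, x \<plusminus> 1 mod r).\<close>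

definition rcr_adj :: "nat \<Rightarrow> nat \<Rightarrow> nat \<Rightarrow> (nat set \<times> nat) \<Rightarrow> (nat set \<times> nat) \<Rightarrow> bool" where
  "rcr_adj n d r u v \<longleftrightarrow> u \<in> rcr_vertices n r \<and> v \<in> rcr_vertices n r \<and>
     ((snd v = snd u \<and> (\<exists>j<d. fst v = flip (fst u) ((j + d * snd u) mod n))) \<or>
      (fst v = fst u \<and> (snd v = (snd u + 1) mod r \<or> snd u = (snd v + 1) mod r)))"

definition rcr_edges :: "nat \<Rightarrow> nat \<Rightarrow> nat \<Rightarrow> ((nat set \<times> nat) \<times> (nat set \<times> nat)) set" where
  "rcr_edges n d r = {(u, v). rcr_adj n d r u v}"

definition graph_dist :: "('a \<times> 'a) set \<Rightarrow> 'a \<Rightarrow> 'a \<Rightarrow> nat" where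
  "graph_dist E u v = (LEAST k. (u, v) \<in> E ^^ k)"

definition graph_diam :: "'a set \<Rightarrow> ('a \<times> 'a) set \<Rightarrow> nat" where
  "graph_diam V E = Max {graph_dist E u v | u v. u \<in> V \<and> v \<in> V}"

definition rcr_diam :: "nat \<Rightarrow> nat \<Rightarrow> nat \<Rightarrow> nat" where
  "rcr_diam n d r = graph_diam (rcr_vertices n r) (rcr_edges n d r)"

end

theory Submission
  imports Defs
begin

definition symd :: "nat set \<Rightarrow> nat set \<Rightarrow> nat set" where
  "symd a S = (a - S) \<union> (S - a)"

definition cov :: "nat \<Rightarrow> nat \<Rightarrow> int \<Rightarrow> int \<Rightarrow> nat set" where
  "cov n d lo hi = {nat ((int d * w + j) mod int n) | w j. lo \<le> w \<and> w \<le> hi \<and> 0 \<le> j \<and> j < int d}"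

definition reach :: "nat \<Rightarrow> nat \<Rightarrow> nat \<Rightarrow> nat set \<times> nat \<Rightarrow> nat set \<times> nat \<Rightarrow> nat \<Rightarrow> bool" where
  "reach n d r u v k \<longleftrightarrow> (\<exists>k'\<le>k. (u,v) \<in> (rcr_edges n d r)^^k')"

lemma reach_refl: "reach n d r u u k"
  unfolding reach_def by (rule exI[of _ 0]) auto

lemma reach_trans: "reach n d r u v k1 \<Longrightarrow> reach n d r v w k2 \<Longrightarrow> reach n d r u w (k1+k2)"
  unfolding reach_def
proof (elim exE conjE)
  fix a b assume "a \<le> k1" "(u,v) \<in> rcr_edges n d r ^^ a" "b \<le> k2" "(v,w) \<in> rcr_edges n d r ^^ b"
  then have "(u,w) \<in> rcr_edges n d r ^^ (a+b)" by (auto simp: relpow_add)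
  then show "\<exists>k'\<le>k1 + k2. (u, w) \<in> rcr_edges n d r ^^ k'" using \<open>a \<le> k1\<close> \<open>b \<le> k2\<close>
    by (intro exI[of _ "a+b"]) auto
qed

lemma reach_mono: "reach n d r u v k \<Longrightarrow> k \<le> k' \<Longrightarrow> reach n d r u v k'"
  unfolding reach_def by (meson order_trans)

lemma reach_edge: "rcr_adj n d r u v \<Longrightarrow> reach n d r u v 1"
  unfolding reach_def rcr_edges_def by (intro exI[of _ 1]) auto

lemma cov_mono: "lo' \<le> lo \<Longrightarrow> hi \<le> hi' \<Longrightarrow> cov n d lo hi \<subseteq> cov n d lo' hi'"
  unfolding cov_def by fastforce

lemma cov_split_lo: "cov n d lo hi \<subseteq> cov n d lo lo \<union> cov n d (lo+1) hi"
  unfolding cov_def by (auto, metis order.order_iff_strict zless_imp_add1_zle)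

lemma cov_split_hi: "cov n d lo hi \<subseteq> cov n d hi hi \<union> cov n d lo (hi - 1)"
  unfolding cov_def by (auto, smt (verit))

lemma nat_mod_lt: "0 < n \<Longrightarrow> nat (x mod int n) < n"
  by (simp add: nat_less_iff)

lemma cov_sub: "0 < n \<Longrightarrow> cov n d lo hi \<subseteq> {0..<n}"
  unfolding cov_def using nat_mod_lt by auto

lemma cov_card: "cov n d lo hi \<subseteq> (\<lambda>c. nat (c mod int n)) ` {int d * lo ..< int d * (hi+1)}"
proof
  fix c assume "c \<in> cov n d lo hi"
  then obtain w j where c: "c = nat ((int d * w + j) mod int n)" "lo \<le> w" "w \<le> hi" "0 \<le> j" "j < int d"
    unfolding cov_def by blast
  have A1: "int d * lo \<le> int d * w" using c by (simp add: mult_left_mono)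
  have A2: "int d * w + j < int d * (hi + 1)"
  proof -
    have "int d * w \<le> int d * hi" using c by (simp add: mult_left_mono)
    moreover have "int d * (hi + 1) = int d * hi + int d" by (simp add: distrib_left)
    ultimately show ?thesis using c by linarith
  qed
  show "c \<in> (\<lambda>c. nat (c mod int n)) ` {int d * lo ..< int d * (hi+1)}"
  proof (rule image_eqI[of _ _ "int d * w + j"])
    show "c = nat ((int d * w + j) mod int n)" using c by simp
    have "int d * lo \<le> int d * w + j" using A1 c(4) by linarith
    then show "int d * w + j \<in> {int d * lo ..< int d * (hi+1)}" using A2 by simp
  qed
qed

lemma cov_card_le: "card (cov n d lo hi) \<le> nat (int d * (hi + 1) - int d * lo)"
proof -
  have "card (cov n d lo hi) \<le> card ((\<lambda>c. nat (c mod int n)) ` {int d * lo ..< int d * (hi+1)})"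
    by (rule card_mono[OF _ cov_card]) auto
  also have "\<dots> \<le> card {int d * lo ..< int d * (hi+1)}" by (rule card_image_le) auto
  finally show ?thesis by simp
qed

lemma full_cov_needs: "0 < n \<Longrightarrow> {0..<n} \<subseteq> cov n d lo hi \<Longrightarrow> int n \<le> int d * (hi - lo + 1)"
proof -
  assume n: "0 < n" and s: "{0..<n} \<subseteq> cov n d lo hi"
  have "n \<le> card (cov n d lo hi)"
    using card_mono[OF finite_subset[OF cov_sub[OF n]] s] by simp
  also have "\<dots> \<le> nat (int d * (hi + 1) - int d * lo)" by (rule cov_card_le)
  finally have "n \<le> nat (int d * (hi + 1) - int d * lo)" .
  moreover have "int d * (hi + 1) - int d * lo = int d * (hi - lo + 1)" by (simp add: algebra_simps)
  ultimately show ?thesis using n by linarith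
qed

lemma full_cov: "0 < n \<Longrightarrow> 0 < d \<Longrightarrow> int n \<le> int d * (hi - lo + 1) \<Longrightarrow> {0..<n} \<subseteq> cov n d lo hi"
proof
  fix c assume n: "0 < n" and d: "0 < d" and h: "int n \<le> int d * (hi - lo + 1)" and c: "c \<in> {0..<n}"
  define c' where "c' = int d * lo + (int c - int d * lo) mod int n"
  have m1: "0 \<le> (int c - int d * lo) mod int n" "(int c - int d * lo) mod int n < int n" using n by auto
  have cm: "c' mod int n = int c"
  proof -
    have "c' mod int n = (int d * lo + (int c - int d * lo)) mod int n"
      unfolding c'_def by (simp add: mod_add_right_eq)
    also have "\<dots> = int c mod int n" by simp
    also have "\<dots> = int c" using c by simp
    finally show ?thesis .
  qed
  define w where "w = c' div int d"
  define j where "j = c' mod int d"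
  have cj: "c' = int d * w + j" unfolding w_def j_def by simp
  have j: "0 \<le> j" "j < int d" unfolding j_def using d by auto
  have "int d * lo \<le> c'" unfolding c'_def using m1 by simp
  then have "lo \<le> w" unfolding w_def using d
    by (metis of_nat_0_less_iff zdiv_mono1 nonzero_mult_div_cancel_left less_irrefl mult.commute of_nat_0_eq_iff)
  have "c' < int d * (hi + 1)" unfolding c'_def using m1 h by (simp add: algebra_simps)
  then have "w \<le> hi" using cj j d
    by (smt (verit, best) mult_le_cancel_left1 distrib_left mult.right_neutral mult_strict_left_mono)
  show "c \<in> cov n d lo hi" unfolding cov_def
    using cm cj j \<open>lo \<le> w\<close> \<open>w \<le> hi\<close> by (intro CollectI exI[of _ w] exI[of _ j]) auto
qed

context
  fixes n d r :: nat
  assumes n0: "0 < n" and d0: "0 < d" and r0: "0 < r" and dv: "n dvd d * r"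
begin

lemma coord_eq:
  assumes "z mod int r = int x"
  shows "(j + d*x) mod n = nat ((int d * z + int j) mod int n)"
proof -
  obtain c where c: "d * r = n * c" using dv by (auto elim: dvdE)
  have z: "z = int r * (z div int r) + int x" using assms by (metis div_mult_mod_eq mult.commute)
  have "int d * z = int d * int x + int n * (int c * (z div int r))"
  proof -
    have "int d * z = int (d * r) * (z div int r) + int d * int x"
      by (subst z) (simp add: algebra_simps)
    also have "\<dots> = int n * (int c * (z div int r)) + int d * int x" by (simp add: c)
    finally show ?thesis by simp
  qed
  then have "(int d * z + int j) mod int n = (int (j + d*x) + int n * (int c * (z div int r))) mod int n"
    by (simp add: algebra_simps)
  also have "\<dots> = int (j + d*x) mod int n" by simp
  also have "\<dots> = int ((j + d*x) mod n)" by (simp add: of_nat_mod)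
  finally show ?thesis by simp
qed

lemma pos_succ: "nat ((s+1) mod int r) = (nat (s mod int r) + 1) mod r"
proof -
  have "int ((nat (s mod int r) + 1) mod r) = (int (nat (s mod int r)) + 1) mod int r"
    by (simp only: of_nat_mod of_nat_add of_nat_1)
  also have "\<dots> = (s mod int r + 1) mod int r"
  proof -
    have "int (nat (s mod int r)) = s mod int r" using r0 by simp
    then show ?thesis by (simp only:)
  qed
  also have "\<dots> = (s+1) mod int r" by (simp add: mod_add_left_eq)
  finally show ?thesis by (metis nat_int)
qed

lemma pos_nat: "x < r \<Longrightarrow> nat (int x mod int r) = x"
  by (simp add: of_nat_mod[symmetric] del: of_nat_mod)

lemma flip_edge: "a \<subseteq> {0..<n} \<Longrightarrow> x < r \<Longrightarrow> j < d \<Longrightarrow>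
   rcr_adj n d r (a,x) (flip a ((j + d*x) mod n), x)"
  unfolding rcr_adj_def rcr_vertices_def flip_def using n0 by auto

lemma up_edge: "a \<subseteq> {0..<n} \<Longrightarrow> rcr_adj n d r (a, nat (s mod int r)) (a, nat ((s+1) mod int r))"
  unfolding rcr_adj_def rcr_vertices_def using r0 pos_succ[of s] by (auto simp: nat_less_iff)

lemma down_edge: "a \<subseteq> {0..<n} \<Longrightarrow> rcr_adj n d r (a, nat (s mod int r)) (a, nat ((s-1) mod int r))"
  unfolding rcr_adj_def rcr_vertices_def using r0 pos_succ[of "s-1"] by (auto simp: nat_less_iff)

lemma symd_sub: "a \<subseteq> {0..<n} \<Longrightarrow> S \<subseteq> {0..<n} \<Longrightarrow> symd a S \<subseteq> {0..<n}"
  unfolding symd_def by auto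

lemma flipset:
  assumes "finite S"
  shows "S \<subseteq> {(j + d*x) mod n | j. j < d} \<Longrightarrow> a \<subseteq> {0..<n} \<Longrightarrow> x < r \<Longrightarrow>
     reach n d r (a,x) (symd a S, x) (card S)"
  using assms
proof (induction S rule: finite_induct)
  case empty
  then show ?case by (simp add: symd_def reach_refl)
next
  case (insert k S)
  then have IH: "reach n d r (a,x) (symd a S, x) (card S)" by auto
  from insert obtain j where j: "j < d" "k = (j + d*x) mod n" by auto
  have Ssub: "S \<subseteq> {0..<n}" using insert(4) n0 by auto
  have "rcr_adj n d r (symd a S, x) (flip (symd a S) k, x)"
    unfolding j(2) by (rule flip_edge[OF symd_sub[OF insert(5) Ssub] insert(6) j(1)])
  moreover have "flip (symd a S) k = symd a (insert k S)"
    using insert(2) unfolding flip_def symd_def by auto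
  ultimately have "reach n d r (symd a S, x) (symd a (insert k S), x) 1"
    using reach_edge by metis
  from reach_trans[OF IH this] show ?case using insert(1,2) by simp
qed

lemma cov_single: "cov n d s s \<subseteq> {(j + d * nat (s mod int r)) mod n | j. j < d}"
proof
  fix c assume "c \<in> cov n d s s"
  then obtain j where j: "c = nat ((int d * s + j) mod int n)" "0 \<le> j" "j < int d"
    unfolding cov_def by auto
  have "c = (nat j + d * nat (s mod int r)) mod n"
    using coord_eq[of s "nat (s mod int r)" "nat j"] j r0 by simp
  then show "c \<in> {(j + d * nat (s mod int r)) mod n | j. j < d}" using j by auto
qed

lemma symd_split: "S1 \<inter> S2 = {} \<Longrightarrow> symd (symd a S1) S2 = symd a (S1 \<union> S2)"
  unfolding symd_def by auto

lemma pos_lt: "nat (s mod int r) < r"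
  using r0 by (simp add: nat_less_iff)

lemma sweep_base:
  assumes "S \<subseteq> cov n d s s" "a \<subseteq> {0..<n}"
  shows "reach n d r (a, nat (s mod int r)) (symd a S, nat (s mod int r)) (card S)"
proof -
  have fin: "finite S" using finite_subset[OF assms(1) finite_subset[OF cov_sub[OF n0]]] by auto
  have "S \<subseteq> {(j + d * nat (s mod int r)) mod n | j. j < d}" using assms(1) cov_single[of s] by (rule subset_trans)
  from flipset[OF fin this assms(2) pos_lt] show ?thesis .
qed

lemma card_split: "finite S \<Longrightarrow> card S = card (S \<inter> C) + card (S - C)"
  by (metis card_Int_Diff)

lemma symd_split2: "symd (symd a (S \<inter> C)) (S - C) = symd a S"
  unfolding symd_def by auto

lemma sweep_up:
  "S \<subseteq> cov n d s (s + int L) \<Longrightarrow> a \<subseteq> {0..<n} \<Longrightarrow>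
   reach n d r (a, nat (s mod int r)) (symd a S, nat ((s + int L) mod int r)) (L + card S)"
proof (induction L arbitrary: s a S)
  case 0
  then show ?case using sweep_base[of S s a] by simp
next
  case (Suc L)
  define S1 where "S1 = S \<inter> cov n d s s"
  define S2 where "S2 = S - cov n d s s"
  have finS: "finite S" using finite_subset[OF Suc(2) finite_subset[OF cov_sub[OF n0]]] by auto
  have eq: "s + int (Suc L) = (s+1) + int L" by simp
  have S2: "S2 \<subseteq> cov n d (s+1) ((s+1) + int L)"
  proof
    fix x assume "x \<in> S2"
    then have "x \<in> S" "x \<notin> cov n d s s" unfolding S2_def by auto
    then have "x \<in> cov n d s ((s+1) + int L)" using Suc(2)[unfolded eq] by (rule_tac subsetD) auto
    then show "x \<in> cov n d (s+1) ((s+1) + int L)" using cov_split_lo[of n d s "(s+1) + int L"] \<open>x \<notin> cov n d s s\<close> by auto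
  qed
  have S1: "S1 \<subseteq> cov n d s s" unfolding S1_def by blast
  have a1: "symd a S1 \<subseteq> {0..<n}" using symd_sub[OF Suc(3) subset_trans[OF S1 cov_sub[OF n0]]] .
  have r1: "reach n d r (a, nat (s mod int r)) (symd a S1, nat (s mod int r)) (card S1)"
    by (rule sweep_base[OF S1 Suc(3)])
  have r2: "reach n d r (symd a S1, nat (s mod int r)) (symd a S1, nat ((s+1) mod int r)) 1"
    by (rule reach_edge[OF up_edge[OF a1]])
  have r3: "reach n d r (symd a S1, nat ((s+1) mod int r)) (symd (symd a S1) S2, nat ((s+1 + int L) mod int r)) (L + card S2)"
    by (rule Suc.IH[OF S2 a1])
  have e: "symd (symd a S1) S2 = symd a S"
    unfolding S1_def S2_def by (rule symd_split2)
  have c: "card S = card S1 + card S2"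
    unfolding S1_def S2_def by (rule card_split[OF finS])
  have "reach n d r (a, nat (s mod int r)) (symd a S, nat ((s+1 + int L) mod int r)) (card S1 + 1 + (L + card S2))"
    using reach_trans[OF reach_trans[OF r1 r2] r3] unfolding e .
  then show ?case unfolding eq c by (simp add: ac_simps)
qed

lemma sweep_down:
  "S \<subseteq> cov n d (s - int L) s \<Longrightarrow> a \<subseteq> {0..<n} \<Longrightarrow>
   reach n d r (a, nat (s mod int r)) (symd a S, nat ((s - int L) mod int r)) (L + card S)"
proof (induction L arbitrary: s a S)
  case 0
  then show ?case using sweep_base[of S s a] by simp
next
  case (Suc L)
  define S1 where "S1 = S \<inter> cov n d s s"
  define S2 where "S2 = S - cov n d s s"
  have finS: "finite S" using finite_subset[OF Suc(2) finite_subset[OF cov_sub[OF n0]]] by auto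
  have eq: "s - int (Suc L) = (s-1) - int L" by simp
  have S2: "S2 \<subseteq> cov n d ((s-1) - int L) (s-1)"
  proof
    fix x assume "x \<in> S2"
    then have "x \<in> S" "x \<notin> cov n d s s" unfolding S2_def by auto
    then have "x \<in> cov n d ((s-1) - int L) s" using Suc(2)[unfolded eq] by (rule_tac subsetD) auto
    then show "x \<in> cov n d ((s-1) - int L) (s-1)" using cov_split_hi[of n d "(s-1) - int L" s] \<open>x \<notin> cov n d s s\<close> by auto
  qed
  have S1: "S1 \<subseteq> cov n d s s" unfolding S1_def by blast
  have a1: "symd a S1 \<subseteq> {0..<n}" using symd_sub[OF Suc(3) subset_trans[OF S1 cov_sub[OF n0]]] .
  have r1: "reach n d r (a, nat (s mod int r)) (symd a S1, nat (s mod int r)) (card S1)"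
    by (rule sweep_base[OF S1 Suc(3)])
  have r2: "reach n d r (symd a S1, nat (s mod int r)) (symd a S1, nat ((s-1) mod int r)) 1"
    by (rule reach_edge[OF down_edge[OF a1]])
  have r3: "reach n d r (symd a S1, nat ((s-1) mod int r)) (symd (symd a S1) S2, nat ((s-1 - int L) mod int r)) (L + card S2)"
    by (rule Suc.IH[OF S2 a1])
  have e: "symd (symd a S1) S2 = symd a S"
    unfolding S1_def S2_def by (rule symd_split2)
  have c: "card S = card S1 + card S2"
    unfolding S1_def S2_def by (rule card_split[OF finS])
  have "reach n d r (a, nat (s mod int r)) (symd a S, nat ((s-1 - int L) mod int r)) (card S1 + 1 + (L + card S2))"
    using reach_trans[OF reach_trans[OF r1 r2] r3] unfolding e .
  then show ?case unfolding eq c by (simp add: ac_simps)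
qed

lemma sweep:
  assumes "S \<subseteq> cov n d (min s e) (max s e)" "a \<subseteq> {0..<n}"
  shows "reach n d r (a, nat (s mod int r)) (symd a S, nat (e mod int r)) (nat \<bar>e - s\<bar> + card S)"
proof (cases "s \<le> e")
  case True
  then show ?thesis using sweep_up[of S s "nat (e - s)" a] assms by simp
next
  case False
  then show ?thesis using sweep_down[of S s "nat (s - e)" a] assms by simp
qed

lemma route:
  assumes a: "a \<subseteq> {0..<n}" and b: "b \<subseteq> {0..<n}" and x: "x < r" and y: "e mod int r = int y"
    and cv: "int n \<le> int d * (\<bar>e - q\<bar> + 1)"
  shows "reach n d r (a,x) (b,y) (nat \<bar>int x - q\<bar> + nat \<bar>e - q\<bar> + n)"
proof -
  define S where "S = symd a b"
  have Sb: "symd a S = b" unfolding S_def symd_def by auto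
  have Sn: "S \<subseteq> {0..<n}" unfolding S_def symd_def using a b by auto
  have cS: "card S \<le> n" using card_mono[OF _ Sn] by simp
  have "\<bar>e - q\<bar> = max q e - min q e" by auto
  then have cov: "S \<subseteq> cov n d (min q e) (max q e)"
    using full_cov[OF n0 d0, where lo="min q e" and hi="max q e"] cv Sn by auto
  have r1: "reach n d r (a, nat (int x mod int r)) (a, nat (q mod int r)) (nat \<bar>q - int x\<bar>)"
    using sweep[of "{}" "int x" q a] a by (simp add: symd_def)
  have r2: "reach n d r (a, nat (q mod int r)) (symd a S, nat (e mod int r)) (nat \<bar>e - q\<bar> + card S)"
    by (rule sweep[OF cov a])
  have "reach n d r (a, x) (b, y) (nat \<bar>q - int x\<bar> + (nat \<bar>e - q\<bar> + card S))"
    using reach_trans[OF r1 r2] pos_nat[OF x] Sb y by simp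
  then show ?thesis by (rule reach_mono) (use cS in auto)
qed

end

lemma zcases:
  fixes z y r :: int
  assumes "0 < r" "z mod r = y"
  shows "z = y \<or> z = y + r \<or> z = y - r \<or> z \<ge> y + 2*r \<or> z \<le> y - 2*r"
proof -
  define q where "q = z div r"
  have z: "z = r * q + y" unfolding q_def using assms(2) div_mult_mod_eq[of z r] by (simp add: mult.commute)
  consider "q = 0" | "q = 1" | "q = -1" | "q \<ge> 2" | "q \<le> -2" by linarith
  then show ?thesis
  proof cases
    case 4
    then have "r * q \<ge> r * 2" using assms by (intro mult_left_mono) auto
    then show ?thesis using z by linarith
  next
    case 5
    then have "r * q \<le> r * (-2)" using assms by (intro mult_left_mono) auto
    then show ?thesis using z by linarith
  qed (use z in auto)
qed

lemma LB1:
  fixes z lo hi r M :: int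
  assumes "lo \<le> 0" "0 \<le> hi" "lo \<le> z" "z \<le> hi" "3 \<le> r" "z mod r = 0" "r - 1 \<le> hi - lo"
    "M = min (2*hi - 2*lo - z) (2*hi - 2*lo + z)"
  shows "r \<le> M"
  using zcases[of r z 0] assms by (auto simp: min_def)

lemma LB2:
  fixes z lo hi r M :: int
  assumes "lo \<le> 0" "0 \<le> hi" "lo \<le> z" "z \<le> hi" "3 \<le> r" "z mod r = h" "r - 1 \<le> hi - lo"
    "2*h \<le> r" "0 \<le> h"
    "M = min (2*hi - 2*lo - z) (2*hi - 2*lo + z)"
  shows "r + h - 2 \<le> M"
  using zcases[of r z h] assms by (auto simp: min_def)

lemma LB3:
  fixes z lo hi r M p :: int
  assumes "lo \<le> 0" "0 \<le> hi" "lo \<le> z" "z \<le> hi" "0 < r" "z mod r = 0" "p - 1 \<le> hi - lo"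
    "2*p - 2 \<le> r"
    "M = min (2*hi - 2*lo - z) (2*hi - 2*lo + z)"
  shows "2*p - 2 \<le> M"
  using zcases[of r z 0] assms by (auto simp: min_def)

lemma LB4:
  fixes z lo hi r M :: int
  assumes "lo \<le> 0" "0 \<le> hi" "lo \<le> z" "z \<le> hi" "0 < r" "z mod r = h"
    "2*h \<le> r" "0 \<le> h"
    "M = min (2*hi - 2*lo - z) (2*hi - 2*lo + z)"
  shows "h \<le> M"
  using zcases[of r z h] assms by (auto simp: min_def)

lemma UB1:
  fixes X Y r :: int
  assumes "0 \<le> X" "X < r" "0 \<le> Y" "Y < r" "3 \<le> r"
  shows "\<exists>q e. e mod r = Y \<and> r - 1 \<le> \<bar>e - q\<bar> \<and>
     \<bar>X - q\<bar> + \<bar>e - q\<bar> \<le> (if r = 3 then r else r + r div 2 - 2)"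
proof -
  define t where "t = (Y - X) mod r"
  have t: "0 \<le> t" "t < r" unfolding t_def using assms by auto
  have e1: "(X + t) mod r = Y" unfolding t_def using assms
    by (metis add.commute diff_add_cancel mod_add_right_eq mod_pos_pos_trivial)
  have h: "2 * (r div 2) \<le> r" "r \<le> 2 * (r div 2) + 1" by auto
  consider "t = 0" | "0 < t" "2*t \<le> r" | "2*t > r" using t by linarith
  then show ?thesis
  proof cases
    case 1
    have "(X + r) mod r = Y" using e1 1 by simp
    then show ?thesis using 1 h assms by (intro exI[of _ X] exI[of _ "X + r"]) auto
  next
    case 2
    have "(X + t - r) mod r = Y" using e1 by (simp add: mod_diff_left_eq[symmetric])
    then show ?thesis using 2 h assms t by (intro exI[of _ "X + t - 1"] exI[of _ "X + t - r"]) auto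
  next
    case 3
    then show ?thesis using e1 h assms t by (intro exI[of _ "X - (r - t - 1)"] exI[of _ "X + t"]) auto
  qed
qed

lemma UB2:
  fixes X Y r p :: int
  assumes "0 \<le> X" "X < r" "0 \<le> Y" "Y < r" "0 < r" "1 \<le> p"
  shows "\<exists>q e. e mod r = Y \<and> p - 1 \<le> \<bar>e - q\<bar> \<and>
     \<bar>X - q\<bar> + \<bar>e - q\<bar> \<le> max (r div 2) (2*p - 2)"
proof -
  define t where "t = (Y - X) mod r"
  have t: "0 \<le> t" "t < r" unfolding t_def using assms by auto
  have e1: "(X + t) mod r = Y" unfolding t_def using assms
    by (metis add.commute diff_add_cancel mod_add_right_eq mod_pos_pos_trivial)
  have e2: "(X + t - r) mod r = Y" using e1 by (simp add: mod_diff_left_eq[symmetric])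
  have h: "2 * (r div 2) \<le> r" "r \<le> 2 * (r div 2) + 1" by auto
  consider "2*t \<le> r" "t \<ge> p - 1" | "2*t \<le> r" "t < p - 1" | "2*t > r" "r - t \<ge> p - 1" | "2*t > r" "r - t < p - 1"
    by linarith
  then show ?thesis
  proof cases
    case 1
    then show ?thesis using e1 h assms t by (intro exI[of _ X] exI[of _ "X + t"]) auto
  next
    case 2
    then show ?thesis using e1 h assms t by (intro exI[of _ "X - (p - 1 - t)"] exI[of _ "X + t"]) auto
  next
    case 3
    then show ?thesis using e2 h assms t by (intro exI[of _ X] exI[of _ "X + t - r"]) auto
  next
    case 4
    then show ?thesis using e2 h assms t by (intro exI[of _ "X + (p - 1 - (r - t))"] exI[of _ "X + t - r"]) auto
  qed
qed

lemma step_up: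
  fixes lo hi z c k :: int
  assumes "lo \<le> 0" "0 \<le> hi" "lo \<le> z" "z \<le> hi" "c + min (2*hi - 2*lo - z) (2*hi - 2*lo + z) \<le> k"
  shows "c + min (2*(max hi (z+1)) - 2*lo - (z+1)) (2*(max hi (z+1)) - 2*lo + (z+1)) \<le> k + 1"
  using assms by (simp add: min_def max_def split: if_splits)

lemma step_dn:
  fixes lo hi z c k :: int
  assumes "lo \<le> 0" "0 \<le> hi" "lo \<le> z" "z \<le> hi" "c + min (2*hi - 2*lo - z) (2*hi - 2*lo + z) \<le> k"
  shows "c + min (2*hi - 2*(min lo (z-1)) - (z-1)) (2*hi - 2*(min lo (z-1)) + (z-1)) \<le> k + 1"
  using assms by (simp add: min_def split: if_splits)

context
  fixes n d r :: nat
  assumes n0: "0 < n" and d0: "0 < d" and r0: "0 < r" and dv: "n dvd d * r"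
begin

lemma walk_inv:
  "(({}, 0), (a, x)) \<in> (rcr_edges n d r)^^k \<Longrightarrow>
   \<exists>z lo hi. lo \<le> 0 \<and> 0 \<le> hi \<and> lo \<le> z \<and> z \<le> hi \<and> z mod int r = int x \<and>
     a \<subseteq> cov n d lo hi \<and> finite a \<and>
     int (card a) + min (2*hi - 2*lo - z) (2*hi - 2*lo + z) \<le> int k"
proof (induction k arbitrary: a x)
  case 0
  then show ?case by (intro exI[of _ 0]) auto
next
  case (Suc k)
  from Suc.prems obtain v where v1: "(({}, 0), v) \<in> (rcr_edges n d r)^^k" and v2: "(v, (a,x)) \<in> rcr_edges n d r"
    by (meson relpow_Suc_E)
  obtain a0 x0 where v: "v = (a0, x0)" by (cases v)
  from Suc.IH[of a0 x0] v1 v obtain z lo hi where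
    I: "lo \<le> 0" "0 \<le> hi" "lo \<le> z" "z \<le> hi" "z mod int r = int x0" "a0 \<subseteq> cov n d lo hi" "finite a0"
       "int (card a0) + min (2*hi - 2*lo - z) (2*hi - 2*lo + z) \<le> int k" by blast
  have adj: "rcr_adj n d r (a0, x0) (a, x)" using v2 v unfolding rcr_edges_def by simp
  then have xr: "x < r" unfolding rcr_adj_def rcr_vertices_def by auto
  from adj consider (fl) j where "x = x0" "j < d" "a = flip a0 ((j + d * x0) mod n)"
    | (up) "a = a0" "x = (x0 + 1) mod r" | (dn) "a = a0" "x0 = (x + 1) mod r"
    unfolding rcr_adj_def by auto
  then show ?case
  proof cases
    case fl
    define c where "c = (j + d * x0) mod n"
    have "c = nat ((int d * z + int j) mod int n)" unfolding c_def by (rule coord_eq[OF n0 d0 r0 dv I(5)])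
    then have c: "c \<in> cov n d lo hi" unfolding cov_def using I fl by fastforce
    have sub: "a \<subseteq> insert c a0" using fl unfolding c_def flip_def by auto
    have fin: "finite a" using finite_subset[OF sub] I(7) by simp
    have "card a \<le> card (insert c a0)" by (rule card_mono[OF _ sub]) (use I(7) in simp)
    also have "\<dots> \<le> card a0 + 1" using card_insert_le_m1 I(7) by (simp add: card_insert_if)
    finally have "card a \<le> card a0 + 1" .
    then have ar: "int (card a) + min (2*hi - 2*lo - z) (2*hi - 2*lo + z) \<le> int (Suc k)" using I(8) by simp
    have cv: "a \<subseteq> cov n d lo hi" using sub c I(6) by blast
    have zm: "z mod int r = int x" using I(5) fl(1) by simp
    show ?thesis by (intro exI[of _ z] exI[of _ lo] exI[of _ hi] conjI; (rule I(1-4) zm cv fin ar)?)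
  next
    case up
    have zm: "(z+1) mod int r = int x"
    proof -
      have "(z+1) mod int r = (z mod int r + 1) mod int r" by (simp add: mod_add_left_eq)
      also have "\<dots> = int ((x0 + 1) mod r)" using I(5) by (simp add: of_nat_mod add.commute)
      finally show ?thesis using up by simp
    qed
    have cv: "a \<subseteq> cov n d lo (max hi (z+1))" using I(6) up cov_mono[of lo lo hi "max hi (z+1)"] by auto
    have ar: "int (card a) + min (2*(max hi (z+1)) - 2*lo - (z+1)) (2*(max hi (z+1)) - 2*lo + (z+1)) \<le> int (Suc k)"
      using step_up[OF I(1-4) I(8)] up by simp
    have fin: "finite a" using I(7) up by simp
    have o: "lo \<le> 0" "0 \<le> max hi (z+1)" "lo \<le> z+1" "z+1 \<le> max hi (z+1)" using I by auto
    show ?thesis by (intro exI[of _ "z+1"] exI[of _ lo] exI[of _ "max hi (z+1)"] conjI; (rule o zm cv fin ar)?)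
  next
    case dn
    have zm: "(z-1) mod int r = int x"
    proof -
      have "(z-1) mod int r = (z mod int r - 1) mod int r" by (simp add: mod_diff_left_eq)
      also have "\<dots> = ((int x + 1) mod int r - 1) mod int r" using I(5) dn by (simp add: of_nat_mod add.commute)
      also have "\<dots> = int x mod int r" by (simp add: mod_diff_left_eq)
      also have "\<dots> = int x" using xr by simp
      finally show ?thesis .
    qed
    have cv: "a \<subseteq> cov n d (min lo (z-1)) hi" using I(6) dn cov_mono[of "min lo (z-1)" lo hi hi] by auto
    have ar: "int (card a) + min (2*hi - 2*(min lo (z-1)) - (z-1)) (2*hi - 2*(min lo (z-1)) + (z-1)) \<le> int (Suc k)"
      using step_dn[OF I(1-4) I(8)] dn by simp
    have fin: "finite a" using I(7) dn by simp
    have o: "min lo (z-1) \<le> 0" "0 \<le> hi" "min lo (z-1) \<le> z-1" "z-1 \<le> hi" using I by auto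
    show ?thesis by (intro exI[of _ "z-1"] exI[of _ "min lo (z-1)"] exI[of _ hi] conjI; (rule o zm cv fin ar)?)
  qed
qed

lemma lower:
  assumes "(({}, 0), ({0..<n}, y)) \<in> (rcr_edges n d r)^^k"
  shows "\<exists>z lo hi M. lo \<le> 0 \<and> 0 \<le> hi \<and> lo \<le> z \<and> z \<le> hi \<and> z mod int r = int y \<and>
     int n \<le> int d * (hi - lo + 1) \<and> M = min (2*hi - 2*lo - z) (2*hi - 2*lo + z) \<and> int n + M \<le> int k"
proof -
  from walk_inv[OF assms] obtain z lo hi where I: "lo \<le> 0" "0 \<le> hi" "lo \<le> z" "z \<le> hi" "z mod int r = int y"
     "{0..<n} \<subseteq> cov n d lo hi" "int (card {0..<n}) + min (2*hi - 2*lo - z) (2*hi - 2*lo + z) \<le> int k" by blast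
  show ?thesis using I full_cov_needs[OF n0 I(6)] by auto
qed

lemma upper:
  assumes "u \<in> rcr_vertices n r" "v \<in> rcr_vertices n r"
    and ex: "\<And>X Y. 0 \<le> X \<Longrightarrow> X < int r \<Longrightarrow> 0 \<le> Y \<Longrightarrow> Y < int r \<Longrightarrow>
       \<exists>q e. e mod int r = Y \<and> int n \<le> int d * (\<bar>e - q\<bar> + 1) \<and> \<bar>X - q\<bar> + \<bar>e - q\<bar> \<le> int C"
  shows "\<exists>k\<le>C + n. (u, v) \<in> (rcr_edges n d r)^^k"
proof -
  obtain a x b y where u: "u = (a,x)" and v: "v = (b,y)" by (cases u, cases v)
  have a: "a \<subseteq> {0..<n}" "x < r" and b: "b \<subseteq> {0..<n}" "y < r"
    using assms(1,2) u v unfolding rcr_vertices_def by auto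
  obtain q e where qe: "e mod int r = int y" "int n \<le> int d * (\<bar>e - q\<bar> + 1)" "\<bar>int x - q\<bar> + \<bar>e - q\<bar> \<le> int C"
    using ex[of "int x" "int y"] a b by auto
  have "reach n d r (a,x) (b,y) (nat \<bar>int x - q\<bar> + nat \<bar>e - q\<bar> + n)"
    by (rule route[OF n0 d0 r0 dv a(1) b(1) a(2) qe(1) qe(2)])
  then have "reach n d r (a,x) (b,y) (C + n)" by (rule reach_mono) (use qe(3) in linarith)
  then show ?thesis unfolding reach_def u v .
qed

end

lemma diam_char:
  assumes fin: "finite V" and u0: "u0 \<in> V" and v0: "v0 \<in> V"
    and up: "\<And>u v. u \<in> V \<Longrightarrow> v \<in> V \<Longrightarrow> \<exists>k\<le>D. (u,v) \<in> E^^k"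
    and lo: "\<And>k. (u0,v0) \<in> E^^k \<Longrightarrow> D \<le> k"
  shows "graph_diam V E = D"
proof -
  have dle: "graph_dist E u v \<le> D" if uv: "u \<in> V" "v \<in> V" for u v
  proof -
    obtain k where "k \<le> D" "(u,v) \<in> E^^k" using up[OF uv] by blast
    then show ?thesis unfolding graph_dist_def by (meson Least_le order_trans)
  qed
  have "\<exists>k. (u0,v0) \<in> E^^k" using up[OF u0 v0] by blast
  then have "(u0,v0) \<in> E^^(graph_dist E u0 v0)" unfolding graph_dist_def by (rule LeastI_ex)
  then have "D \<le> graph_dist E u0 v0" by (rule lo)
  then have eq: "graph_dist E u0 v0 = D" using dle[OF u0 v0] by simp
  have A: "{graph_dist E u v | u v. u \<in> V \<and> v \<in> V} = (\<lambda>(u,v). graph_dist E u v) ` (V \<times> V)" by auto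
  show ?thesis unfolding graph_diam_def
  proof (rule Max_eqI)
    show "finite {graph_dist E u v | u v. u \<in> V \<and> v \<in> V}" unfolding A using fin by simp
    show "y \<le> D" if "y \<in> {graph_dist E u v | u v. u \<in> V \<and> v \<in> V}" for y using that dle by auto
    show "D \<in> {graph_dist E u v | u v. u \<in> V \<and> v \<in> V}" using eq u0 v0 by auto
  qed
qed

lemma fin_V: "finite (rcr_vertices n r)"
proof -
  have "rcr_vertices n r \<subseteq> Pow {0..<n} \<times> {0..<r}" unfolding rcr_vertices_def by auto
  then show ?thesis by (rule finite_subset) auto
qed

theorem mainTheorem9:
  fixes n d r :: nat
  assumes "n \<ge> 2" and "d \<ge> 1" and "r \<ge> 3" and "n \<ge> d" and "n dvd d * r"
  shows "(d * r = n \<longrightarrow>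
            (r = 3 \<longrightarrow> rcr_diam n d r = n + r) \<and>
            (r \<ge> 4 \<longrightarrow> rcr_diam n d r = n + (3 * r) div 2 - 2))
       \<and> (d * r \<ge> 2 * n \<longrightarrow>
            rcr_diam n d r = n + max (r div 2) (2 * ((n + d - 1) div d) - 2))"
proof -
  have n0: "0 < n" and d0: "0 < d" and r0: "0 < r" using assms by auto
  note dv = assms(5)
  define V where "V = rcr_vertices n r"
  define E where "E = rcr_edges n d r"
  have finV: "finite V" unfolding V_def by (rule fin_V)
  have diam: "rcr_diam n d r = graph_diam V E" unfolding rcr_diam_def V_def E_def ..
  have u0: "({}, 0) \<in> V" unfolding V_def rcr_vertices_def using r0 by auto
  have vy: "({0..<n}, y) \<in> V" if "y < r" for y unfolding V_def rcr_vertices_def using that by auto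
  have rh: "r div 2 < r" using r0 by simp
  have v00: "({0..<n}, 0) \<in> V" using vy[of 0] r0 by simp
  show ?thesis
  proof (rule conjI)
  show "d * r = n \<longrightarrow> (r = 3 \<longrightarrow> rcr_diam n d r = n + r) \<and> (r \<ge> 4 \<longrightarrow> rcr_diam n d r = n + (3 * r) div 2 - 2)"
  proof
    assume dr: "d * r = n"
    have idr: "int n = int d * int r" using dr by (metis of_nat_mult)
    have cov1: "int n \<le> int d * (\<bar>e - q\<bar> + 1)" if "int r - 1 \<le> \<bar>e - q\<bar>" for e q :: int
      using idr mult_left_mono[of "int r" "\<bar>e - q\<bar> + 1" "int d"] that by simp
    have low1: "int r - 1 \<le> hi - lo" if "int n \<le> int d * (hi - lo + 1)" for hi lo :: int
    proof -
      have "int d * int r \<le> int d * (hi - lo + 1)" using that idr by simp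
      then have "int r \<le> hi - lo + 1" using d0 by (simp add: mult_le_cancel_left_pos)
      then show ?thesis by simp
    qed
    have upall: "\<exists>k\<le>(if r = 3 then r else r + r div 2 - 2) + n. (u, v) \<in> E^^k" if "u \<in> V" "v \<in> V" for u v
      unfolding E_def
    proof (rule upper[OF n0 d0 r0 dv that[unfolded V_def]])
      fix X Y :: int assume XY: "0 \<le> X" "X < int r" "0 \<le> Y" "Y < int r"
      obtain q e where qe: "e mod int r = Y" "int r - 1 \<le> \<bar>e - q\<bar>"
        "\<bar>X - q\<bar> + \<bar>e - q\<bar> \<le> (if int r = 3 then int r else int r + int r div 2 - 2)"
        using UB1[of X "int r" Y] XY assms(3) by auto
      have eqC: "(if int r = 3 then int r else int r + int r div 2 - 2) = int (if r = 3 then r else r + r div 2 - 2)"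
        using assms(3) by (auto simp: zdiv_int)
      show "\<exists>q e. e mod int r = Y \<and> int n \<le> int d * (\<bar>e - q\<bar> + 1) \<and>
          \<bar>X - q\<bar> + \<bar>e - q\<bar> \<le> int (if r = 3 then r else r + r div 2 - 2)"
      proof (rule exI[of _ q], rule exI[of _ e], intro conjI)
        show "e mod int r = Y" by (rule qe(1))
        show "int n \<le> int d * (\<bar>e - q\<bar> + 1)" by (rule cov1[OF qe(2)])
        show "\<bar>X - q\<bar> + \<bar>e - q\<bar> \<le> int (if r = 3 then r else r + r div 2 - 2)" using qe(3) eqC by simp
      qed
    qed
    show "(r = 3 \<longrightarrow> rcr_diam n d r = n + r) \<and> (r \<ge> 4 \<longrightarrow> rcr_diam n d r = n + (3 * r) div 2 - 2)"
    proof (rule conjI)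
    show "r = 3 \<longrightarrow> rcr_diam n d r = n + r"
    proof
      assume r3: "r = 3"
      have "graph_diam V E = n + r"
      proof (rule diam_char[OF finV u0 v00])
        fix u v assume "u \<in> V" "v \<in> V"
        then show "\<exists>k\<le>n + r. (u, v) \<in> E ^^ k" using upall r3 by (simp add: add.commute)
      next
        fix k assume "(({}, 0), {0..<n}, 0) \<in> E ^^ k"
        then obtain z lo hi M where I: "lo \<le> 0" "0 \<le> hi" "lo \<le> z" "z \<le> hi" "z mod int r = 0"
          "int n \<le> int d * (hi - lo + 1)" "M = min (2*hi - 2*lo - z) (2*hi - 2*lo + z)" "int n + M \<le> int k"
          using lower[OF n0 d0 r0 dv, of 0 k] unfolding E_def by auto
        have "int r \<le> M" using LB1[OF I(1-4) _ I(5) low1[OF I(6)] I(7)] assms(3) by simp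
        then show "n + r \<le> k" using I(8) by simp
      qed
      then show "rcr_diam n d r = n + r" using diam by simp
    qed
    next
    show "r \<ge> 4 \<longrightarrow> rcr_diam n d r = n + (3 * r) div 2 - 2"
    proof
      assume r4: "r \<ge> 4"
      have eqD: "n + (3 * r) div 2 - 2 = r + r div 2 - 2 + n" using r4 by simp
      have "graph_diam V E = r + r div 2 - 2 + n"
      proof (rule diam_char[OF finV u0 vy[OF rh]])
        fix u v assume "u \<in> V" "v \<in> V"
        then show "\<exists>k\<le>r + r div 2 - 2 + n. (u, v) \<in> E ^^ k" using upall r4 by simp
      next
        fix k assume "(({}, 0), {0..<n}, r div 2) \<in> E ^^ k"
        then obtain z lo hi M where I: "lo \<le> 0" "0 \<le> hi" "lo \<le> z" "z \<le> hi" "z mod int r = int (r div 2)"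
          "int n \<le> int d * (hi - lo + 1)" "M = min (2*hi - 2*lo - z) (2*hi - 2*lo + z)" "int n + M \<le> int k"
          using lower[OF n0 d0 r0 dv, of "r div 2" k] unfolding E_def by auto
        have "int r + int (r div 2) - 2 \<le> M"
          by (rule LB2[OF I(1-4) _ I(5) low1[OF I(6)] _ _ I(7)]) (use assms(3) in auto)
        then show "r + r div 2 - 2 + n \<le> k" using I(8) r4 by simp
      qed
      then show "rcr_diam n d r = n + (3 * r) div 2 - 2" using diam eqD by simp
    qed
    qed
  qed
  next
  show "d * r \<ge> 2 * n \<longrightarrow> rcr_diam n d r = n + max (r div 2) (2 * ((n + d - 1) div d) - 2)"
  proof
    assume dr: "d * r \<ge> 2 * n"
    define p where "p = (n + d - 1) div d"
    have pm: "n + d - 1 = d * p + (n + d - 1) mod d" unfolding p_def by simp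
    have "(n + d - 1) mod d < d" using d0 by simp
    then have P1: "n \<le> d * p" and P2: "d * p < n + d" using pm d0 by linarith+
    have p1: "1 \<le> p" using P1 n0 by (cases p) auto
    have iP1: "int n \<le> int d * int p" using P1 by (metis of_nat_le_iff of_nat_mult)
    have iP2: "int d * int p < int n + int d" using P2 by (metis of_nat_less_iff of_nat_mult of_nat_add)
    have idr: "2 * int n \<le> int d * int r" using dr by (metis of_nat_le_iff of_nat_mult of_nat_numeral)
    have pr: "2 * int p - 2 \<le> int r"
    proof (rule ccontr)
      assume "\<not> ?thesis"
      then have "int r + 1 \<le> 2 * int p - 2" by simp
      then have "int d * (int r + 1) \<le> int d * (2 * int p - 2)" by (rule mult_left_mono) simp
      then show False using idr iP2 d0 by (simp add: algebra_simps)
    qed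
    have low2: "int p - 1 \<le> hi - lo" if "int n \<le> int d * (hi - lo + 1)" for hi lo :: int
    proof (rule ccontr)
      assume "\<not> ?thesis"
      then have "hi - lo + 1 \<le> int p - 1" by simp
      then have "int d * (hi - lo + 1) \<le> int d * (int p - 1)" by (rule mult_left_mono) simp
      then show False using that iP2 by (simp add: algebra_simps)
    qed
    define C where "C = max (r div 2) (2 * p - 2)"
    have iC: "int C = max (int r div 2) (2 * int p - 2)" unfolding C_def using p1 by (auto simp: zdiv_int)
    have "graph_diam V E = C + n"
    proof -
      have upall: "\<exists>k\<le>C + n. (u, v) \<in> E^^k" if "u \<in> V" "v \<in> V" for u v
        unfolding E_def
      proof (rule upper[OF n0 d0 r0 dv that[unfolded V_def]])
        fix X Y :: int assume XY: "0 \<le> X" "X < int r" "0 \<le> Y" "Y < int r"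
        obtain q e where qe: "e mod int r = Y" "int p - 1 \<le> \<bar>e - q\<bar>"
          "\<bar>X - q\<bar> + \<bar>e - q\<bar> \<le> max (int r div 2) (2 * int p - 2)"
          using UB2[of X "int r" Y "int p"] XY r0 p1 by auto
        have cv: "int n \<le> int d * (\<bar>e - q\<bar> + 1)"
          using iP1 mult_left_mono[of "int p" "\<bar>e - q\<bar> + 1" "int d"] qe(2) by simp
        show "\<exists>q e. e mod int r = Y \<and> int n \<le> int d * (\<bar>e - q\<bar> + 1) \<and>
          \<bar>X - q\<bar> + \<bar>e - q\<bar> \<le> int C"
        proof (rule exI[of _ q], rule exI[of _ e], intro conjI)
          show "e mod int r = Y" by (rule qe(1))
          show "int n \<le> int d * (\<bar>e - q\<bar> + 1)" by (rule cv)
          show "\<bar>X - q\<bar> + \<bar>e - q\<bar> \<le> int C" using qe(3) iC by simp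
        qed
      qed
      show ?thesis
      proof (cases "2 * p - 2 \<le> r div 2")
        case True
        show ?thesis
        proof (rule diam_char[OF finV u0 vy[OF rh] upall])
          fix k assume "(({}, 0), {0..<n}, r div 2) \<in> E ^^ k"
          then obtain z lo hi M where I: "lo \<le> 0" "0 \<le> hi" "lo \<le> z" "z \<le> hi" "z mod int r = int (r div 2)"
            "int n \<le> int d * (hi - lo + 1)" "M = min (2*hi - 2*lo - z) (2*hi - 2*lo + z)" "int n + M \<le> int k"
            using lower[OF n0 d0 r0 dv, of "r div 2" k] unfolding E_def by auto
          have "int (r div 2) \<le> M"
            by (rule LB4[OF I(1-4) _ I(5) _ _ I(7)]) (use r0 in auto)
          then show "C + n \<le> k" using I(8) True unfolding C_def by simp
        qed
      next
        case False
        show ?thesis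
        proof (rule diam_char[OF finV u0 v00 upall])
          fix k assume "(({}, 0), {0..<n}, 0) \<in> E ^^ k"
          then obtain z lo hi M where I: "lo \<le> 0" "0 \<le> hi" "lo \<le> z" "z \<le> hi" "z mod int r = 0"
            "int n \<le> int d * (hi - lo + 1)" "M = min (2*hi - 2*lo - z) (2*hi - 2*lo + z)" "int n + M \<le> int k"
            using lower[OF n0 d0 r0 dv, of 0 k] unfolding E_def by auto
          have "2 * int p - 2 \<le> M"
            by (rule LB3[OF I(1-4) _ I(5) low2[OF I(6)] pr I(7)]) (use r0 in auto)
          then show "C + n \<le> k" using I(8) False p1 unfolding C_def by simp
        qed
      qed
    qed
    then show "rcr_diam n d r = n + max (r div 2) (2 * ((n + d - 1) div d) - 2)"
      using diam unfolding C_def p_def by simp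
  qed
  qed
qed

end
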